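(* A point $\mathbf{x}\in\Delta^0$ is a local maximizer of the problem $\max\{f(\mathbf{x}):\mathbf{x}\in\Delta^0\}$ if and only if $\mathbf{x}=\mathbf{x}(C)$ for some maximal clique $C$ of $G$. Moreover, every local maximizer of this problem is a strict local maximizer.
   Context: Let $G=(\mathcal{V},\mathcal{E})$ be a simple undirected graph on vertex set $\mathcal{V}=\{1,\dots,n\}$ with adjacency matrix $\mathbf{A}=(a_{ij})$ ($a_{ij}=1$ if $(i,j)\in\mathcal{E}$, else $0$; $a_{ii}=0$). A clique is a subset $C\subseteq\mathcal{V}$ with $(i,j)\in\mathcal{E}$ for all distinct $i,j\in C$; it is maximal if it is not strictly contained in another clique. Let $\Delta=\{\mathbf{x}\in\mathbb{R}^n:\mathbf{0}\le\mathbf{x}\le\mathbf{1},\ \mathbf{1}^{\mathsf T}\mathbf{x}=1\}$, $\mathrm{supp}(\mathbf{x})=\{i:x_i\neq0\}$, and $\Delta^0=\{\mathbf{x}\in\Delta:\mathrm{supp}(\mathbf{x})\text{ is a clique}\}$. For a non-empty clique $C$, $\mathbf{x}(C)\in\Delta$ has $x(C)_i=1/|C|$ for $i\in C$ and $0$ otherwise. For $\mathbf{x}\in\Delta$, $\mathcal{P}(\mathbf{x})$ is the set of vectors in $\Delta$ obtained by permuting the coordinates of $\mathbf{x}$. Let $\Phi:X\to\mathbb{R}$ be twice continuously differentiable on an open set $X\supset\Delta$, satisfying for every $\mathbf{x}\in\Delta$: (C1) $\nabla^2\Phi(\mathbf{x})$ is positive semidefinite; (C2) $\|\nabla^2\Phi(\mathbf{x})\|_2<2$;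 (C3) $\Phi$ is constant on $\mathcal{P}(\mathbf{x})$. Define $f(\mathbf{x})=\mathbf{x}^{\mathsf T}\mathbf{A}\mathbf{x}+\Phi(\mathbf{x})$. A point $\mathbf{x}\in Y$ is a (strict) local maximizer of $\max\{f:Y\}$ if there is $\epsilon>0$ with $f(\mathbf{x})\ge f(\tilde{\mathbf{x}})$ (resp. $>$) for all $\tilde{\mathbf{x}}\in Y$ with $0<\|\tilde{\mathbf{x}}-\mathbf{x}\|_2<\epsilon$. *)

theory Defs
  imports "HOL-Analysis.Analysis"
begin

text \<open>Vertices are the elements of a finite type 'n (playing the role of {1..n});
  vectors in R^n are elements of real^'n.\<close>

definition simple_graph :: "('n \<Rightarrow> 'n \<Rightarrow> bool) \<Rightarrow> bool" where
  "simple_graph E \<longleftrightarrow> (\<forall>i j. E i j \<longleftrightarrow> E j i) \<and> (\<forall>i. \<not> E i i)"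

definition adj_matrix :: "('n::finite \<Rightarrow> 'n \<Rightarrow> bool) \<Rightarrow> real^'n^'n" where
  "adj_matrix E = (\<chi> i j. if E i j then 1 else 0)"

definition is_clique :: "('n \<Rightarrow> 'n \<Rightarrow> bool) \<Rightarrow> 'n set \<Rightarrow> bool" where
  "is_clique E C \<longleftrightarrow> (\<forall>i\<in>C. \<forall>j\<in>C. i \<noteq> j \<longrightarrow> E i j)"

definition maximal_clique :: "('n \<Rightarrow> 'n \<Rightarrow> bool) \<Rightarrow> 'n set \<Rightarrow> bool" where
  "maximal_clique E C \<longleftrightarrow> is_clique E C \<and> (\<forall>D. is_clique E D \<longrightarrow> C \<subseteq> D \<longrightarrow> D = C)"

definition std_simplex :: "(real^'n::finite) set" where
  "std_simplex = {x. (\<forall>i. 0 \<le> x $ i \<and> x $ i \<le> 1) \<and> (\<Sum>i\<in>UNIV. x $ i) = 1}"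

definition supp :: "real^'n \<Rightarrow> 'n set" where
  "supp x = {i. x $ i \<noteq> 0}"

definition clique_simplex :: "('n::finite \<Rightarrow> 'n \<Rightarrow> bool) \<Rightarrow> (real^'n) set" where
  "clique_simplex E = {x \<in> std_simplex. is_clique E (supp x)}"

definition clique_vec :: "'n::finite set \<Rightarrow> real^'n" where
  "clique_vec C = (\<chi> i. if i \<in> C then 1 / real (card C) else 0)"

definition perms_of :: "real^'n::finite \<Rightarrow> (real^'n) set" where
  "perms_of x = {(\<chi> i. x $ p i) | p. p permutes (UNIV :: 'n set)} \<inter> std_simplex"

definition local_maximizer :: "('a::metric_space \<Rightarrow> real) \<Rightarrow> 'a set \<Rightarrow> 'a \<Rightarrow> bool" where
  "local_maximizer f Y x \<longleftrightarrow> x \<in> Y \<and>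
     (\<exists>e>0. \<forall>y\<in>Y. 0 < dist y x \<and> dist y x < e \<longrightarrow> f x \<ge> f y)"

definition strict_local_maximizer :: "('a::metric_space \<Rightarrow> real) \<Rightarrow> 'a set \<Rightarrow> 'a \<Rightarrow> bool" where
  "strict_local_maximizer f Y x \<longleftrightarrow> x \<in> Y \<and>
     (\<exists>e>0. \<forall>y\<in>Y. 0 < dist y x \<and> dist y x < e \<longrightarrow> f x > f y)"

end

theory Submission
  imports Defs
begin


locale P2 =
  fixes E :: "'n::finite \<Rightarrow> 'n \<Rightarrow> bool"
    and \<Phi> :: "real^'n \<Rightarrow> real"
    and grad :: "real^'n \<Rightarrow> real^'n"
    and H :: "real^'n \<Rightarrow> real^'n^'n"
    and X :: "(real^'n) set"
  assumes graph: "simple_graph E"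
    and X_open: "open X" and X_sup: "std_simplex \<subseteq> X"
    and d1: "\<And>x. x \<in> X \<Longrightarrow> (\<Phi> has_derivative (\<lambda>h. grad x \<bullet> h)) (at x)"
    and d2: "\<And>x. x \<in> X \<Longrightarrow> (grad has_derivative (\<lambda>h. H x *v h)) (at x)"
    and C2: "\<And>x. x \<in> std_simplex \<Longrightarrow> onorm (\<lambda>v. H x *v v) < 2"
    and C3: "\<And>x y. x \<in> std_simplex \<Longrightarrow> y \<in> perms_of x \<Longrightarrow> \<Phi> y = \<Phi> x"
begin

definition obj where "obj x = x \<bullet> (adj_matrix E *v x) + \<Phi> x"
definition face :: "'n set \<Rightarrow> (real^'n) set" where "face T = {y \<in> std_simplex. supp y \<subseteq> T}"

lemma quad_clique:
  assumes "y \<in> clique_simplex E"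
  shows "y \<bullet> (adj_matrix E *v y) = 1 - y \<bullet> y"
proof -
  have S: "(\<Sum>i\<in>UNIV. y$i) = 1" and cl: "is_clique E (supp y)"
    using assms by (auto simp: clique_simplex_def std_simplex_def)
  have e: "(if E i j then y$i * y$j else 0) = y$i * y$j - (if i = j then y$i*y$j else 0)" for i j
  proof (cases "y$i = 0 \<or> y$j = 0")
    case True then show ?thesis by auto
  next
    case False
    then have "i \<in> supp y" "j \<in> supp y" by (auto simp: supp_def)
    then show ?thesis using cl graph unfolding is_clique_def simple_graph_def by auto
  qed
  have "y \<bullet> (adj_matrix E *v y) = (\<Sum>i\<in>UNIV. \<Sum>j\<in>UNIV. if E i j then y$i*y$j else 0)"
    by (simp add: inner_vec_def matrix_vector_mult_def adj_matrix_def sum_distrib_left) (intro sum.cong refl; simp)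
  also have "\<dots> = (\<Sum>i\<in>UNIV. \<Sum>j\<in>UNIV. y$i*y$j - (if i = j then y$i*y$j else 0))"
    by (simp only: e)
  also have "\<dots> = (\<Sum>i\<in>UNIV. y$i * (\<Sum>j\<in>UNIV. y$j) - y$i*y$i)"
    by (simp add: sum_subtractf sum_distrib_left)
  also have "\<dots> = 1 - y \<bullet> y"
    using S by (simp add: sum_subtractf inner_vec_def)
  finally show ?thesis .
qed

lemma face_clique: "is_clique E T \<Longrightarrow> face T \<subseteq> clique_simplex E"
  by (auto simp: face_def clique_simplex_def is_clique_def)

lemma obj_face: "is_clique E T \<Longrightarrow> y \<in> face T \<Longrightarrow> obj y = 1 - y \<bullet> y + \<Phi> y"
  using quad_clique face_clique by (auto simp: obj_def)

lemma face_seg: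
  assumes x: "x \<in> face T" and y: "y \<in> face T" and t: "0 \<le> t" "t \<le> 1"
  shows "x + t *\<^sub>R (y - x) \<in> face T"
proof -
  have xs: "\<And>i. 0 \<le> x$i \<and> x$i \<le> 1" "(\<Sum>i\<in>UNIV. x$i) = 1" "\<And>i. i \<notin> T \<Longrightarrow> x$i = 0"
    using x by (auto simp: face_def std_simplex_def supp_def)
  have ys: "\<And>i. 0 \<le> y$i \<and> y$i \<le> 1" "(\<Sum>i\<in>UNIV. y$i) = 1" "\<And>i. i \<notin> T \<Longrightarrow> y$i = 0"
    using y by (auto simp: face_def std_simplex_def supp_def)
  have c: "x + t *\<^sub>R (y - x) = (\<chi> i. (1 - t) * x$i + t * y$i)" by (simp add: vec_eq_iff algebra_simps)
  have b: "0 \<le> (1 - t) * x$i + t * y$i \<and> (1 - t) * x$i + t * y$i \<le> 1" for i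
  proof -
    have "(1 - t) * x$i \<le> (1 - t) * 1" using xs(1)[of i] t by (intro mult_left_mono) auto
    moreover have "t * y$i \<le> t * 1" using ys(1)[of i] t by (intro mult_left_mono) auto
    ultimately show ?thesis using xs(1)[of i] ys(1)[of i] t by auto
  qed
  have s: "(\<Sum>i\<in>UNIV. (1 - t) * x$i + t * y$i) = 1"
    using xs(2) ys(2) by (simp add: sum.distrib sum_distrib_left[symmetric])
  show ?thesis using b s xs(3) ys(3) unfolding face_def std_simplex_def supp_def c by (auto, metis mult_zero_right add.right_neutral)
qed

end


lemma line_has_real_derivative:
  fixes F :: "real^'n \<Rightarrow> real"
  assumes "(F has_derivative (\<lambda>h. G \<bullet> h)) (at (x + t *\<^sub>R d))"
  shows "((\<lambda>s. F (x + s *\<^sub>R d)) has_real_derivative (G \<bullet> d)) (at t)"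
proof -
  have l: "((\<lambda>s. x + s *\<^sub>R d) has_derivative (\<lambda>s. s *\<^sub>R d)) (at t)" by (auto intro!: derivative_eq_intros)
  have "((\<lambda>s. F (x + s *\<^sub>R d)) has_derivative (\<lambda>s. G \<bullet> (s *\<^sub>R d))) (at t)"
    using diff_chain_at[OF l assms] by (simp add: o_def)
  then show ?thesis unfolding has_field_derivative_def
    by (rule has_derivative_eq_rhs) (auto simp: fun_eq_iff mult.commute)
qed

lemma line_has_real_derivative2:
  fixes g :: "real^'n \<Rightarrow> real^'n"
  assumes "(g has_derivative (\<lambda>h. M *v h)) (at (x + t *\<^sub>R d))"
  shows "((\<lambda>s. g (x + s *\<^sub>R d) \<bullet> d) has_real_derivative ((M *v d) \<bullet> d)) (at t)"
proof -
  have l: "((\<lambda>s. x + s *\<^sub>R d) has_derivative (\<lambda>s. s *\<^sub>R d)) (at t)" by (auto intro!: derivative_eq_intros)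
  have "((\<lambda>s. g (x + s *\<^sub>R d)) has_derivative (\<lambda>s. M *v (s *\<^sub>R d))) (at t)"
    using diff_chain_at[OF l assms] by (simp add: o_def)
  then have "((\<lambda>s. g (x + s *\<^sub>R d) \<bullet> d) has_derivative (\<lambda>s. (M *v (s *\<^sub>R d)) \<bullet> d)) (at t)"
    by (rule has_derivative_inner_left)
  then show ?thesis unfolding has_field_derivative_def
    by (rule has_derivative_eq_rhs) (auto simp: fun_eq_iff mult.commute matrix_vector_mult_scaleR)
qed

lemma concave_escape:
  fixes \<psi> \<psi>1 \<psi>2 :: "real \<Rightarrow> real"
  assumes d1: "\<And>t. 0 \<le> t \<Longrightarrow> t \<le> 1 \<Longrightarrow> (\<psi> has_real_derivative \<psi>1 t) (at t)"
   and d2: "\<And>t. 0 \<le> t \<Longrightarrow> t \<le> 1 \<Longrightarrow> (\<psi>1 has_real_derivative \<psi>2 t) (at t)"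
   and neg: "\<And>t. 0 \<le> t \<Longrightarrow> t \<le> 1 \<Longrightarrow> \<psi>2 t < 0"
   and le: "\<psi> 0 \<le> \<psi> 1"
  shows "\<exists>\<xi>>0. \<xi> \<le> 1 \<and> (\<forall>t. 0 < t \<and> t \<le> \<xi> \<longrightarrow> \<psi> 0 < \<psi> t)"
proof -
  obtain z where z: "0 < z" "z < 1" "\<psi> 1 - \<psi> 0 = (1 - 0) * \<psi>1 z"
    using MVT2[of 0 1 \<psi> \<psi>1] d1 by auto
  have z0: "\<psi>1 z \<ge> 0" using z le by simp
  have "\<forall>t. 0 < t \<and> t \<le> z \<longrightarrow> \<psi> 0 < \<psi> t"
  proof (intro allI impI)
    fix t assume t: "0 < t \<and> t \<le> z"
    obtain w where w: "0 < w" "w < t" "\<psi> t - \<psi> 0 = (t - 0) * \<psi>1 w"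
      using MVT2[of 0 t \<psi> \<psi>1] d1 t z by auto
    have "\<psi>1 z < \<psi>1 w"
    proof (rule DERIV_neg_imp_decreasing[of w z])
      show "w < z" using w t by auto
      fix u assume "w \<le> u" "u \<le> z"
      then show "\<exists>y. (\<psi>1 has_real_derivative y) (at u) \<and> y < 0"
        using d2 neg w z by (intro exI[of _ "\<psi>2 u"]) auto
    qed
    then have "\<psi>1 w > 0" using z0 by simp
    then have "t * \<psi>1 w > 0" using t by (simp add: mult_pos_pos)
    then show "\<psi> 0 < \<psi> t" using w by simp
  qed
  then show ?thesis using z by auto
qed

context P2 begin

lemma local_to_strict:
  assumes T: "is_clique E T" and x: "x \<in> face T" and e: "e > 0"
    and loc: "\<forall>y\<in>face T. 0 < dist y x \<and> dist y x < e \<longrightarrow> obj y \<le> obj x"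
    and y: "y \<in> face T" "y \<noteq> x"
  shows "obj y < obj x"
proof (rule ccontr)
  assume "\<not> obj y < obj x" hence fy: "obj x \<le> obj y" by simp
  define d where "d = y - x"
  have dne: "d \<noteq> 0" using y by (simp add: d_def)
  define \<psi> where "\<psi> t = - ((x + t *\<^sub>R d) \<bullet> (x + t *\<^sub>R d)) + \<Phi> (x + t *\<^sub>R d)" for t
  define \<psi>1 where "\<psi>1 t = - (2 * ((x + t *\<^sub>R d) \<bullet> d)) + grad (x + t *\<^sub>R d) \<bullet> d" for t
  define \<psi>2 where "\<psi>2 t = - (2 * (d \<bullet> d)) + (H (x + t *\<^sub>R d) *v d) \<bullet> d" for t
  have seg: "x + t *\<^sub>R d \<in> face T" if "0 \<le> t" "t \<le> 1" for t
    using face_seg[OF x y(1) that] by (simp add: d_def)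
  have inS: "x + t *\<^sub>R d \<in> std_simplex" if "0 \<le> t" "t \<le> 1" for t
    using seg[OF that] by (simp add: face_def)
  have inX: "x + t *\<^sub>R d \<in> X" if "0 \<le> t" "t \<le> 1" for t
    using inS[OF that] X_sup by auto
  have f\<psi>: "obj (x + t *\<^sub>R d) = 1 + \<psi> t" if "0 \<le> t" "t \<le> 1" for t
    using obj_face[OF T seg[OF that]] by (simp add: \<psi>_def)
  have sq: "((\<lambda>p. p \<bullet> p) has_derivative (\<lambda>h. (2 *\<^sub>R p) \<bullet> h)) (at p)" for p :: "real^'n"
    by (rule has_derivative_eq_rhs, rule has_derivative_inner[OF has_derivative_ident has_derivative_ident])
       (auto simp: fun_eq_iff inner_commute algebra_simps)
  have lin: "((\<lambda>p. p \<bullet> d) has_derivative (\<lambda>h. d \<bullet> h)) (at p)" for p :: "real^'n"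
    by (rule has_derivative_eq_rhs, rule has_derivative_inner_left[OF has_derivative_ident])
       (auto simp: fun_eq_iff inner_commute)
  have D1: "(\<psi> has_real_derivative \<psi>1 t) (at t)" if "0 \<le> t" "t \<le> 1" for t
  proof -
    have a: "((\<lambda>s. (x + s *\<^sub>R d) \<bullet> (x + s *\<^sub>R d)) has_real_derivative ((2 *\<^sub>R (x + t *\<^sub>R d)) \<bullet> d)) (at t)"
      by (rule line_has_real_derivative[OF sq])
    have b: "((\<lambda>s. \<Phi> (x + s *\<^sub>R d)) has_real_derivative (grad (x + t *\<^sub>R d) \<bullet> d)) (at t)"
      by (rule line_has_real_derivative[OF d1[OF inX[OF that]]])
    have "((\<lambda>s. - ((x + s *\<^sub>R d) \<bullet> (x + s *\<^sub>R d)) + \<Phi> (x + s *\<^sub>R d)) has_real_derivative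
       (- ((2 *\<^sub>R (x + t *\<^sub>R d)) \<bullet> d) + grad (x + t *\<^sub>R d) \<bullet> d)) (at t)"
      by (intro DERIV_add DERIV_minus a b)
    then show ?thesis unfolding \<psi>_def \<psi>1_def by simp
  qed
  have D2: "(\<psi>1 has_real_derivative \<psi>2 t) (at t)" if "0 \<le> t" "t \<le> 1" for t
  proof -
    have a: "((\<lambda>s. (x + s *\<^sub>R d) \<bullet> d) has_real_derivative (d \<bullet> d)) (at t)"
      by (rule line_has_real_derivative[OF lin])
    have b: "((\<lambda>s. grad (x + s *\<^sub>R d) \<bullet> d) has_real_derivative ((H (x + t *\<^sub>R d) *v d) \<bullet> d)) (at t)"
      by (rule line_has_real_derivative2[OF d2[OF inX[OF that]]])
    have "((\<lambda>s. - (2 * ((x + s *\<^sub>R d) \<bullet> d)) + grad (x + s *\<^sub>R d) \<bullet> d) has_real_derivative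
       (- (2 * (d \<bullet> d)) + (H (x + t *\<^sub>R d) *v d) \<bullet> d)) (at t)"
      by (intro DERIV_add DERIV_minus DERIV_cmult a b)
    then show ?thesis unfolding \<psi>1_def \<psi>2_def by simp
  qed
  have NEG: "\<psi>2 t < 0" if "0 \<le> t" "t \<le> 1" for t
  proof -
    let ?M = "H (x + t *\<^sub>R d)"
    have nd: "norm d > 0" using dne by simp
    have "(?M *v d) \<bullet> d \<le> norm (?M *v d) * norm d" by (rule norm_cauchy_schwarz)
    also have "\<dots> \<le> onorm ((*v) ?M) * norm d * norm d"
      using onorm[OF matrix_vector_mul_bounded_linear, of ?M d] nd
      by (intro mult_right_mono) auto
    also have "\<dots> < 2 * norm d * norm d"
      using C2[OF inS[OF that]] nd by (intro mult_strict_right_mono) auto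
    also have "\<dots> = 2 * (d \<bullet> d)" by (simp add: power2_norm_eq_inner[symmetric] power2_eq_square)
    finally show ?thesis by (simp add: \<psi>2_def)
  qed
  have LE: "\<psi> 0 \<le> \<psi> 1" using f\<psi>[of 0] f\<psi>[of 1] fy by (simp add: d_def)
  obtain \<xi> where xi: "\<xi> > 0" "\<xi> \<le> 1" "\<forall>t. 0 < t \<and> t \<le> \<xi> \<longrightarrow> \<psi> 0 < \<psi> t"
    using concave_escape[of \<psi> \<psi>1 \<psi>2, OF D1 D2 NEG LE] by auto
  define t where "t = min \<xi> (e / (2 * norm d))"
  have nd: "norm d > 0" using dne by simp
  have t0: "0 < t" "t \<le> \<xi>" "t \<le> 1" using xi e nd by (auto simp: t_def)
  have "t * norm d \<le> e / (2 * norm d) * norm d" using nd t0 by (intro mult_right_mono) (auto simp: t_def)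
  also have "\<dots> = e / 2" using nd by simp
  finally have td: "t * norm d < e" using e by simp
  have dist: "dist (x + t *\<^sub>R d) x = t * norm d" using t0 by (simp add: dist_norm)
  have "obj (x + t *\<^sub>R d) \<le> obj x"
    using loc seg[of t] t0 td dist nd by auto
  moreover have "obj x = 1 + \<psi> 0" using f\<psi>[of 0] by simp
  ultimately show False using f\<psi>[of t] t0 xi(3) by auto
qed

end


lemma supp_clique_vec: "supp (clique_vec (D::'n::finite set)) = D"
proof -
  have "card D > 0" if "i \<in> D" for i using that card_gt_0_iff by fastforce
  then show ?thesis by (auto simp: supp_def clique_vec_def)
qed

lemma clique_vec_simplex:
  assumes "(T::'n::finite set) \<noteq> {}"
  shows "clique_vec T \<in> std_simplex"
proof -
  have c: "card T > 0" using assms card_gt_0_iff by fastforce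
  have "(\<Sum>i\<in>UNIV. clique_vec T $ i) = (\<Sum>i\<in>T. clique_vec T $ i)"
    by (rule sum.mono_neutral_right) (auto simp: clique_vec_def)
  also have "\<dots> = (\<Sum>i\<in>T. 1 / real (card T))" by (simp add: clique_vec_def)
  also have "\<dots> = 1" using c assms by simp
  finally show ?thesis using c assms by (auto simp: std_simplex_def clique_vec_def)
qed

context P2 begin

lemma clique_vec_face: "T \<noteq> {} \<Longrightarrow> clique_vec T \<in> face T"
  using clique_vec_simplex supp_clique_vec by (auto simp: face_def)

lemma strict_to_vec:
  assumes T: "is_clique E T" and x: "x \<in> face T"
    and strict: "\<forall>y\<in>face T. y \<noteq> x \<longrightarrow> obj y < obj x"
  shows "x = clique_vec T"
proof -
  have xS: "x \<in> std_simplex" and xT: "\<And>i. i \<notin> T \<Longrightarrow> x$i = 0"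
    using x by (auto simp: face_def supp_def)
  have eq: "x$i = x$j" if ij: "i\<in>T" "j\<in>T" for i j
  proof (rule ccontr)
    assume ne: "x$i \<noteq> x$j"
    define p where "p = Transposition.transpose i j"
    define y where "y = (\<chi> k. x $ (p k))"
    have pp: "p permutes UNIV" unfolding p_def by (rule permutes_swap_id) auto
    have ys: "y $ k = x $ p k" for k by (simp add: y_def)
    have sum1: "(\<Sum>k\<in>UNIV. g (x $ p k)) = (\<Sum>k\<in>UNIV. g (x $ k))" for g :: "real \<Rightarrow> real"
      using sum.permute[OF pp, of "\<lambda>k. g (x $ k)"] by (simp add: o_def)
    have yS: "y \<in> std_simplex" using xS sum1[of "\<lambda>r. r"] unfolding std_simplex_def by (simp add: ys)
    have yT: "y \<in> face T"
    proof -
      have "y $ k = 0" if "k \<notin> T" for k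
      proof -
        have "k \<noteq> i" "k \<noteq> j" using that ij by auto
        then have "p k = k" by (simp add: p_def transpose_apply_other)
        then show ?thesis using xT that by (simp add: ys)
      qed
      then show ?thesis using yS by (auto simp: face_def supp_def)
    qed
    have yP: "y \<in> perms_of x" using pp yS unfolding perms_of_def y_def by blast
    have phi: "\<Phi> y = \<Phi> x" by (rule C3[OF xS yP])
    have yy: "y \<bullet> y = x \<bullet> x" using sum1[of "\<lambda>r. r * r"] by (simp add: inner_vec_def ys)
    have "obj y = obj x" using obj_face[OF T yT] obj_face[OF T x] phi yy by simp
    moreover have "y \<noteq> x"
    proof
      assume "y = x" then have "y $ i = x $ i" by simp
      then show False using ne by (simp add: ys p_def)
    qed
    ultimately show False using strict yT by auto
  qed
  have Tne: "T \<noteq> {}"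
  proof
    assume "T = {}"
    then have "(\<Sum>i\<in>UNIV. x$i) = 0" using xT by simp
    then show False using xS by (simp add: std_simplex_def)
  qed
  then obtain i0 where i0: "i0 \<in> T" by auto
  have c: "card T > 0" using Tne card_gt_0_iff by fastforce
  have "1 = (\<Sum>i\<in>UNIV. x$i)" using xS by (simp add: std_simplex_def)
  also have "\<dots> = (\<Sum>i\<in>T. x$i)" by (rule sum.mono_neutral_right) (auto simp: xT)
  also have "\<dots> = (\<Sum>i\<in>T. x$i0)" by (intro sum.cong refl) (rule eq[OF _ i0])
  also have "\<dots> = real (card T) * x$i0" by simp
  finally have h: "1 = real (card T) * x$i0" .
  have cr: "real (card T) \<noteq> 0" using c by linarith
  have "x$i0 = 1 / real (card T)" using h cr by (simp add: eq_divide_eq mult.commute)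
  then have "x$k = clique_vec T $ k" for k
    using eq[OF _ i0, of k] xT[of k] by (cases "k \<in> T") (simp_all add: clique_vec_def)
  then show ?thesis by (simp add: vec_eq_iff)
qed

lemma face_compact: "compact (face T)"
proof -
  have cl: "closed (face T)"
  proof -
    have "face T = {y. (\<forall>i. 0 \<le> y$i) \<and> (\<forall>i. y$i \<le> 1) \<and> (\<Sum>i\<in>UNIV. y$i) = 1}
                 \<inter> (\<Inter>i\<in>-T. {y. y$i = 0})"
      by (auto simp: face_def std_simplex_def supp_def)
    also have "closed \<dots>"
      by (intro closed_Int closed_INT ballI closed_Collect_conj closed_Collect_all closed_Collect_le closed_Collect_eq
          continuous_intros)
    finally show ?thesis .
  qed
  have "face T \<subseteq> cbox 0 1" by (auto simp: face_def std_simplex_def mem_box_cart)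
  then have "bounded (face T)" by (rule bounded_subset[OF bounded_cbox])
  then show ?thesis using cl by (simp add: compact_eq_bounded_closed)
qed

lemma obj_cont: "continuous_on (face T) obj"
proof -
  have "continuous_on X \<Phi>"
  proof (rule continuous_at_imp_continuous_on, rule ballI)
    fix x assume "x \<in> X"
    show "isCont \<Phi> x" by (rule has_derivative_continuous[OF d1[OF \<open>x \<in> X\<close>]])
  qed
  then have "continuous_on (face T) \<Phi>"
    by (rule continuous_on_subset) (use X_sup in \<open>auto simp: face_def\<close>)
  moreover have "continuous_on (face T) (\<lambda>x. x \<bullet> (adj_matrix E *v x))"
    by (intro continuous_intros linear_continuous_on matrix_vector_mul_bounded_linear)
  ultimately show ?thesis unfolding obj_def[abs_def] by (intro continuous_on_add)
qed

lemma maximal_strict: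
  assumes C: "maximal_clique E C"
  shows "strict_local_maximizer obj (clique_simplex E) (clique_vec C)"
proof -
  have Ccl: "is_clique E C" using C by (simp add: maximal_clique_def)
  have Cne: "C \<noteq> {}"
  proof
    assume "C = {}"
    moreover obtain i :: 'n where True by auto
    moreover have "is_clique E {i}" by (simp add: is_clique_def)
    ultimately show False using C unfolding maximal_clique_def by blast
  qed
  have c: "card C > 0" using Cne card_gt_0_iff by fastforce
  obtain z where z: "z \<in> face C" "\<forall>y\<in>face C. obj y \<le> obj z"
    using continuous_attains_sup[OF face_compact _ obj_cont] clique_vec_face[OF Cne] by blast
  have strict: "\<forall>y\<in>face C. y \<noteq> z \<longrightarrow> obj y < obj z"
    using local_to_strict[OF Ccl z(1), of 1] z(2) by auto
  have zv: "z = clique_vec C" by (rule strict_to_vec[OF Ccl z(1) strict])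
  let ?x = "clique_vec C"
  have xin: "?x \<in> clique_simplex E" using face_clique[OF Ccl] clique_vec_face[OF Cne] by auto
  have "\<forall>y\<in>clique_simplex E. 0 < dist y ?x \<and> dist y ?x < 1 / real (card C) \<longrightarrow> obj ?x > obj y"
  proof (intro ballI impI)
    fix y assume y: "y \<in> clique_simplex E" and dy: "0 < dist y ?x \<and> dist y ?x < 1 / real (card C)"
    have "C \<subseteq> supp y"
    proof
      fix i assume i: "i \<in> C"
      have "\<bar>(y - ?x) $ i\<bar> \<le> norm (y - ?x)" by (rule component_le_norm_cart)
      then have "\<bar>y $ i - 1 / real (card C)\<bar> < 1 / real (card C)"
        using dy i by (simp add: dist_norm clique_vec_def)
      then have "y $ i \<noteq> 0" by auto
      then show "i \<in> supp y" by (simp add: supp_def)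
    qed
    moreover have "is_clique E (supp y)" using y by (simp add: clique_simplex_def)
    ultimately have "supp y = C" using C unfolding maximal_clique_def by blast
    then have "y \<in> face C" using y by (auto simp: face_def clique_simplex_def)
    moreover have "y \<noteq> ?x" using dy by auto
    ultimately show "obj ?x > obj y" using strict zv by auto
  qed
  then show ?thesis using xin c unfolding strict_local_maximizer_def
    by (intro conjI exI[of _ "1 / real (card C)"]) auto
qed

lemma local_vec:
  assumes T: "is_clique E T" and x: "x \<in> face T"
    and lm: "local_maximizer obj (clique_simplex E) x"
  shows "x = clique_vec T"
proof -
  obtain e where e: "e > 0" "\<forall>y\<in>clique_simplex E. 0 < dist y x \<and> dist y x < e \<longrightarrow> obj x \<ge> obj y"
    using lm by (auto simp: local_maximizer_def)
  have loc: "\<forall>y\<in>face T. 0 < dist y x \<and> dist y x < e \<longrightarrow> obj y \<le> obj x"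
    using e(2) face_clique[OF T] by auto
  show ?thesis
    by (rule strict_to_vec[OF T x]) (use local_to_strict[OF T x e(1) loc] in auto)
qed

lemma forward:
  assumes lm: "local_maximizer obj (clique_simplex E) x"
  shows "\<exists>C. maximal_clique E C \<and> x = clique_vec C"
proof -
  have xin: "x \<in> clique_simplex E" using lm by (simp add: local_maximizer_def)
  let ?S = "supp x"
  have Scl: "is_clique E ?S" using xin by (simp add: clique_simplex_def)
  have xf: "x \<in> face ?S" using xin by (simp add: face_def clique_simplex_def)
  have xv: "x = clique_vec ?S" by (rule local_vec[OF Scl xf lm])
  have "maximal_clique E ?S"
    unfolding maximal_clique_def
  proof (intro conjI allI impI Scl)
    fix D assume D: "is_clique E D" "?S \<subseteq> D"
    have "x \<in> face D" using xin D by (simp add: face_def clique_simplex_def)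
    then have "x = clique_vec D" by (rule local_vec[OF D(1) _ lm])
    then show "D = ?S" by (simp add: supp_clique_vec)
  qed
  then show ?thesis using xv by blast
qed

lemma strict_imp_local: "strict_local_maximizer g Y x \<Longrightarrow> local_maximizer g Y x"
  unfolding strict_local_maximizer_def local_maximizer_def by (fastforce intro: less_imp_le)

lemma main:
  "(\<forall>x \<in> clique_simplex E.
            local_maximizer obj (clique_simplex E) x \<longleftrightarrow> (\<exists>C. maximal_clique E C \<and> x = clique_vec C))
       \<and> (\<forall>x. local_maximizer obj (clique_simplex E) x \<longrightarrow> strict_local_maximizer obj (clique_simplex E) x)"
proof (intro conjI ballI allI impI iffI)
  fix x assume "local_maximizer obj (clique_simplex E) x"
  then show "\<exists>C. maximal_clique E C \<and> x = clique_vec C" by (rule forward)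
next
  fix x assume "\<exists>C. maximal_clique E C \<and> x = clique_vec C"
  then obtain C where "maximal_clique E C" "x = clique_vec C" by blast
  then show "local_maximizer obj (clique_simplex E) x" using strict_imp_local[OF maximal_strict] by simp
next
  fix x assume "local_maximizer obj (clique_simplex E) x"
  then obtain C where "maximal_clique E C" "x = clique_vec C" using forward by blast
  then show "strict_local_maximizer obj (clique_simplex E) x" using maximal_strict by simp
qed

end

theorem proposition2:
  fixes E :: "'n::finite \<Rightarrow> 'n \<Rightarrow> bool"
    and \<Phi> :: "real^'n \<Rightarrow> real"
    and grad :: "real^'n \<Rightarrow> real^'n"
    and H :: "real^'n \<Rightarrow> real^'n^'n"
    and X :: "(real^'n) set"
  assumes graph: "simple_graph E"
    and X_open: "open X" and X_sup: "std_simplex \<subseteq> X"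
    and d1: "\<And>x. x \<in> X \<Longrightarrow> (\<Phi> has_derivative (\<lambda>h. grad x \<bullet> h)) (at x)"
    and d2: "\<And>x. x \<in> X \<Longrightarrow> (grad has_derivative (\<lambda>h. H x *v h)) (at x)"
    and H_cont: "continuous_on X H"
    and C1: "\<And>x v. x \<in> std_simplex \<Longrightarrow> 0 \<le> v \<bullet> (H x *v v)"
    and C2: "\<And>x. x \<in> std_simplex \<Longrightarrow> onorm (\<lambda>v. H x *v v) < 2"
    and C3: "\<And>x y. x \<in> std_simplex \<Longrightarrow> y \<in> perms_of x \<Longrightarrow> \<Phi> y = \<Phi> x"
  defines "f \<equiv> (\<lambda>x. x \<bullet> (adj_matrix E *v x) + \<Phi> x)"
  shows "(\<forall>x \<in> clique_simplex E.
            local_maximizer f (clique_simplex E) x \<longleftrightarrow> (\<exists>C. maximal_clique E C \<and> x = clique_vec C))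
       \<and> (\<forall>x. local_maximizer f (clique_simplex E) x \<longrightarrow> strict_local_maximizer f (clique_simplex E) x)"
proof -
  interpret P: P2 E \<Phi> grad H X
    by (unfold_locales) (use graph X_open X_sup d1 d2 C2 C3 in auto)
  have "f = P.obj" by (simp add: f_def P.obj_def fun_eq_iff)
  then show ?thesis using P.main by simp
qed

end
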